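(* Let $F$ be a random variable with $0\le F\le M$ for some $M>0$, and suppose $\mathbb{E}[F]\le2e^{-M}$. Then $\mathbb{E}[e^F]\le1+\sqrt{8e^M\mathbb{E}[F]}$. *)

theory Defs
  imports "HOL-Probability.Probability"
begin

end

theory Submission
  imports Defs
begin

lemma exp_bound_aux:
  fixes x M :: real
  assumes "0 \<le> x" "x \<le> M"
  shows "exp x \<le> 1 + exp M * x"
proof -
  have "1 - x \<le> exp (- x)" using exp_ge_add_one_self[of "-x"] by simp
  hence "(1 - x) * exp x \<le> exp (-x) * exp x" by (simp add: mult_right_mono)
  hence "exp x - x * exp x \<le> 1" by (simp add: algebra_simps exp_minus_inverse)
  moreover have "x * exp x \<le> x * exp M" using assms by (simp add: mult_left_mono)
  ultimately show ?thesis by (simp add: algebra_simps)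
qed

theorem lemma8:
  fixes P :: "'a measure" and F :: "'a \<Rightarrow> real" and M :: real
  assumes "prob_space P"
    and "F \<in> borel_measurable P"
    and "M > 0"
    and "\<forall>x\<in>space P. 0 \<le> F x \<and> F x \<le> M"
    and "prob_space.expectation P F \<le> 2 * exp (- M)"
  shows "prob_space.expectation P (\<lambda>x. exp (F x)) \<le> 1 + sqrt (8 * exp M * prob_space.expectation P F)"
proof -
  interpret prob_space P by fact
  have intF: "integrable P F"
    apply (rule integrable_const_bound[where B=M])
    using assms(4) by (auto intro!: AE_I2) (use assms(2) in auto)
  have intE: "integrable P (\<lambda>x. exp (F x))"
    apply (rule integrable_const_bound[where B="exp M"])
    using assms(4) assms(2) by (auto intro!: AE_I2)
  have int2: "integrable P (\<lambda>x. 1 + exp M * F x)" using intF by auto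
  have "expectation (\<lambda>x. exp (F x)) \<le> expectation (\<lambda>x. 1 + exp M * F x)"
    using intE int2 assms(4) by (intro integral_mono) (auto intro: exp_bound_aux)
  also have "\<dots> = 1 + exp M * expectation F"
    using intF by (simp add: prob_space)
  finally have A: "expectation (\<lambda>x. exp (F x)) \<le> 1 + exp M * expectation F" .
  define t where "t = exp M * expectation F"
  have t0: "0 \<le> t" unfolding t_def using assms(4) by (auto intro!: integral_nonneg_AE AE_I2)
  have "t \<le> exp M * (2 * exp (-M))" unfolding t_def using assms(5) by (simp add: mult_left_mono)
  also have "\<dots> = 2" by (simp add: exp_minus_inverse field_simps exp_minus)
  finally have t2: "t \<le> 2" .
  have "t\<^sup>2 \<le> 8 * t" using t0 t2 by (simp add: power2_eq_square mult_right_mono)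
  hence "t \<le> sqrt (8 * t)" by (rule real_le_rsqrt)
  thus ?thesis using A unfolding t_def by (simp add: mult.assoc)
qed

end
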